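(* Let $\alpha,\beta,\nu>0$ and set $\beta_t=t\beta$, $\alpha_t=\sqrt{t+1}\,\alpha$, $\gamma_t=\frac{\alpha\nu}{\beta\sqrt{t+1}}$, $\omega_t=1$. Then for every integer $t\ge1$ and every symmetric positive definite $\boldsymbol\Sigma\in\mathbb{R}^{d\times d}$ there exists a symmetric matrix $\boldsymbol H\in\mathbb{R}^{d\times d}$ such that $$\boldsymbol H\preceq\frac1{\alpha_t}\Big(\frac{\beta_{t+1}}{\beta_t}-\omega_t\Big)\boldsymbol I+\frac{\beta_{t+1}\gamma_t}{\alpha_t}\boldsymbol\Sigma\quad\text{and}\quad\nu\boldsymbol I\preceq\boldsymbol\Sigma^{-1/2}\boldsymbol H\boldsymbol\Sigma^{-1/2}.$$ In particular, along any run of the CASBO algorithm with these parameters, the constraints on $\boldsymbol H_k^t$ (with $\boldsymbol\Sigma=\boldsymbol\Sigma_k^t$) are always feasible.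
   Context: $\preceq$ denotes the Loewner order on symmetric matrices; $\boldsymbol\Sigma^{-1/2}$ is the inverse of the symmetric positive definite square root. In the CASBO algorithm, at iteration $t$ and for block $k$, a symmetric matrix $\boldsymbol H_k^t$ must be chosen satisfying exactly the two displayed constraints with $\boldsymbol\Sigma$ the current covariance $\boldsymbol\Sigma_k^t$ (which is symmetric positive definite). *)

theory Defs
  imports "HOL-Analysis.Analysis"
begin

text \<open>Square real matrices of an arbitrary finite dimension d = CARD('n).\<close>

definition sym_mat :: "real^'n^'n \<Rightarrow> bool" where
  "sym_mat A \<longleftrightarrow> transpose A = A"

definition psd_mat :: "real^'n^'n \<Rightarrow> bool" where
  "psd_mat A \<longleftrightarrow> sym_mat A \<and> (\<forall>x. 0 \<le> x \<bullet> (A *v x))"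

definition pd_mat :: "real^'n^'n \<Rightarrow> bool" where
  "pd_mat A \<longleftrightarrow> sym_mat A \<and> (\<forall>x. x \<noteq> 0 \<longrightarrow> 0 < x \<bullet> (A *v x))"

definition loewner_le :: "real^'n^'n \<Rightarrow> real^'n^'n \<Rightarrow> bool" (infix "\<preceq>\<^sub>L" 50) where
  "A \<preceq>\<^sub>L B \<longleftrightarrow> psd_mat (B - A)"

definition mat_sqrt :: "real^'n^'n \<Rightarrow> real^'n^'n" where
  "mat_sqrt A = (THE S. pd_mat S \<and> S ** S = A)"

definition mat_inv_sqrt :: "real^'n^'n \<Rightarrow> real^'n^'n" where
  "mat_inv_sqrt A = matrix_inv (mat_sqrt A)"

definition beta_t :: "real \<Rightarrow> nat \<Rightarrow> real" where "beta_t \<beta> t = real t * \<beta>"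
definition alpha_t :: "real \<Rightarrow> nat \<Rightarrow> real" where "alpha_t \<alpha> t = sqrt (real t + 1) * \<alpha>"
definition gamma_t :: "real \<Rightarrow> real \<Rightarrow> real \<Rightarrow> nat \<Rightarrow> real" where
  "gamma_t \<alpha> \<beta> \<nu> t = \<alpha> * \<nu> / (\<beta> * sqrt (real t + 1))"
definition omega_t :: "nat \<Rightarrow> real" where "omega_t t = 1"

end

theory Submission
  imports Defs
begin

lemma sym_dot:
  fixes A :: "real^'n^'n"
  assumes "sym_mat A"
  shows "(A *v x) \<bullet> y = x \<bullet> (A *v y)"
proof -
  have "A *v x = x v* A"
    using assms unfolding sym_mat_def by (metis transpose_matrix_vector)
  then show ?thesis by (simp add: dot_lmul_matrix)
qed

lemma quad_zero:
  fixes b c :: real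
  assumes "\<And>s. 2 * s * b \<le> s^2 * c"
  shows "b = 0"
proof (rule ccontr)
  assume nz: "b \<noteq> 0"
  define s where "s = b / (\<bar>c\<bar> + 1)"
  have pos: "\<bar>c\<bar> + 1 > 0" by simp
  have sk: "s * (\<bar>c\<bar> + 1) = b" using pos by (simp add: s_def)
  have "2 * s * b * (\<bar>c\<bar> + 1)^2 \<le> s^2 * c * (\<bar>c\<bar> + 1)^2"
    by (rule mult_right_mono[OF assms]) simp
  also have "s^2 * c * (\<bar>c\<bar> + 1)^2 = (s * (\<bar>c\<bar> + 1))^2 * c" by (simp add: power_mult_distrib)
  also have "2 * s * b * (\<bar>c\<bar> + 1)^2 = 2 * (s * (\<bar>c\<bar> + 1)) * b * (\<bar>c\<bar> + 1)"
    by (simp add: power2_eq_square)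
  finally have "2 * b^2 * (\<bar>c\<bar> + 1) \<le> b^2 * c" unfolding sk by (simp add: power2_eq_square)
  moreover have "b^2 > 0" using nz by simp
  ultimately have "2 * (\<bar>c\<bar> + 1) \<le> c"
    by (metis mult.commute mult.left_commute mult_le_cancel_left_pos)
  thus False by (simp add: abs_if split: if_splits)
qed


lemma eigen_at_max:
  fixes A :: "real^'n^'n"
  assumes sym: "sym_mat A" and V: "subspace V" and inv: "\<forall>x\<in>V. A *v x \<in> V"
    and uV: "u \<in> V" and u1: "norm u = 1"
    and mx: "\<forall>y\<in>V. norm y = 1 \<longrightarrow> y \<bullet> (A *v y) \<le> u \<bullet> (A *v u)"
  shows "A *v u = (u \<bullet> (A *v u)) *\<^sub>R u"
proof -
  define m where "m = u \<bullet> (A *v u)"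
  have uu: "u \<bullet> u = 1" using u1 by (simp add: dot_square_norm)
  have key: "y \<bullet> (A *v u) = 0" if yV: "y \<in> V" and yu: "y \<bullet> u = 0" for y
  proof -
    have "2 * s * (y \<bullet> (A *v u)) \<le> s^2 * (m * (y \<bullet> y) - y \<bullet> (A *v y))" for s
    proof -
      define z where "z = u + s *\<^sub>R y"
      have zV: "z \<in> V" unfolding z_def using V uV yV by (simp add: subspace_add subspace_scale)
      have uy: "u \<bullet> y = 0" using yu by (simp add: inner_commute)
      have zz: "z \<bullet> z = 1 + s^2 * (y \<bullet> y)"
        unfolding z_def by (simp add: inner_add inner_commute uu uy power2_eq_square algebra_simps)
      have zpos: "z \<bullet> z > 0" unfolding zz by (simp add: add_pos_nonneg)
      hence nz: "norm z > 0" by (metis inner_gt_zero_iff zero_less_norm_iff)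
      have "(z /\<^sub>R norm z) \<in> V" using V zV by (simp add: subspace_scale)
      moreover have "norm (z /\<^sub>R norm z) = 1" using nz by simp
      ultimately have "(z /\<^sub>R norm z) \<bullet> (A *v (z /\<^sub>R norm z)) \<le> m" using mx m_def by blast
      hence "(z \<bullet> (A *v z)) / (norm z)^2 \<le> m"
        by (simp add: matrix_vector_mult_scaleR power2_eq_square divide_inverse mult_ac)
      hence le: "z \<bullet> (A *v z) \<le> m * (z \<bullet> z)"
        using nz by (simp add: dot_square_norm divide_le_eq)
      have sy: "u \<bullet> (A *v y) = y \<bullet> (A *v u)" using sym_dot[OF sym, of y u] by (simp add: inner_commute)
      have "z \<bullet> (A *v z) = m + 2 * s * (y \<bullet> (A *v u)) + s^2 * (y \<bullet> (A *v y))"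
        unfolding z_def m_def
        by (simp add: matrix_vector_right_distrib matrix_vector_mult_scaleR inner_add
            sy power2_eq_square algebra_simps)
      with le zz show ?thesis by (simp add: algebra_simps)
    qed
    thus ?thesis by (rule quad_zero)
  qed
  define w where "w = A *v u - m *\<^sub>R u"
  have wV: "w \<in> V" unfolding w_def using V uV inv by (simp add: subspace_diff subspace_scale)
  have wu: "w \<bullet> u = 0" unfolding w_def m_def
    by (simp only: inner_diff_left inner_scaleR_left uu) (simp add: inner_commute)
  have "w \<bullet> w = w \<bullet> (A *v u - m *\<^sub>R u)" by (subst (2) w_def) (rule refl)
  also have "\<dots> = w \<bullet> (A *v u) - m * (w \<bullet> u)" by (simp only: inner_diff_right inner_scaleR_right)
  also have "\<dots> = 0" using key[OF wV wu] wu by simp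
  finally have "w = 0" by simp
  thus ?thesis unfolding w_def m_def by simp
qed


definition eigbasis :: "real^'n^'n \<Rightarrow> (real^'n) set \<Rightarrow> (real^'n) set \<Rightarrow> bool" where
  "eigbasis A V B \<longleftrightarrow> finite B \<and> B \<subseteq> V \<and>
     (\<forall>b\<in>B. norm b = 1 \<and> A *v b = (b \<bullet> (A *v b)) *\<^sub>R b) \<and>
     (\<forall>b\<in>B. \<forall>c\<in>B. b \<noteq> c \<longrightarrow> b \<bullet> c = 0) \<and>
     (\<forall>x\<in>V. x = (\<Sum>b\<in>B. (b \<bullet> x) *\<^sub>R b))"

lemma spectral_sub:
  fixes A :: "real^'n^'n"
  assumes sym: "sym_mat A"
  shows "subspace V \<Longrightarrow> (\<forall>x\<in>V. A *v x \<in> V) \<Longrightarrow> \<exists>B. eigbasis A V B"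
proof (induction "dim V" arbitrary: V rule: less_induct)
  case less
  note V = less.prems(1) and inv = less.prems(2)
  show ?case
  proof (cases "V = {0}")
    case True
    then show ?thesis by (intro exI[of _ "{}"]) (simp add: eigbasis_def)
  next
    case False
    then obtain x where xV: "x \<in> V" and x0: "x \<noteq> 0" using V subspace_0 by blast
    define S where "S = V \<inter> sphere 0 1"
    have "x /\<^sub>R norm x \<in> S" unfolding S_def using xV x0 V by (simp add: subspace_scale)
    hence Sne: "S \<noteq> {}" by blast
    have Sc: "compact S" unfolding S_def
      using closed_subspace[OF V] compact_sphere by (simp add: closed_Int_compact)
    have cont: "continuous_on S (\<lambda>y. y \<bullet> (A *v y))"
      by (intro continuous_intros continuous_on_compose2[OF linear_continuous_on] ) (auto intro: matrix_vector_mul_linear bounded_linear_intros)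
    obtain u where uS: "u \<in> S" and umax: "\<forall>y\<in>S. y \<bullet> (A *v y) \<le> u \<bullet> (A *v u)"
      using continuous_attains_sup[OF Sc Sne cont] by blast
    have uV: "u \<in> V" and u1: "norm u = 1" using uS by (auto simp: S_def)
    have mx: "\<forall>y\<in>V. norm y = 1 \<longrightarrow> y \<bullet> (A *v y) \<le> u \<bullet> (A *v u)"
      using umax by (auto simp: S_def)
    have eig: "A *v u = (u \<bullet> (A *v u)) *\<^sub>R u"
      by (rule eigen_at_max[OF sym V inv uV u1 mx])
    have uu: "u \<bullet> u = 1" using u1 by (simp add: dot_square_norm)
    define V' where "V' = {y \<in> V. y \<bullet> u = 0}"
    have V': "subspace V'" unfolding V'_def subspace_def using V
      by (auto simp: subspace_0 subspace_add subspace_scale inner_add_left)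
    have inv': "\<forall>y\<in>V'. A *v y \<in> V'"
    proof
      fix y assume yV': "y \<in> V'"
      have "(A *v y) \<bullet> u = y \<bullet> (A *v u)" by (rule sym_dot[OF sym])
      also have "\<dots> = 0" using yV' eig by (simp add: V'_def) (metis inner_scaleR_right mult_zero_right)
      finally show "A *v y \<in> V'" using yV' inv by (simp add: V'_def)
    qed
    have "u \<notin> V'" using uu by (simp add: V'_def)
    hence sub: "V' \<subset> V" using uV unfolding V'_def by blast
    have s1: "span V' = V'" using V' by (simp add: span_eq_iff)
    have s2: "span V = V" using V by (simp add: span_eq_iff)
    have "dim V' < dim V"
      using dim_psubset[of V' V] sub unfolding s1 s2 by blast
    then obtain B' where B': "eigbasis A V' B'" using less.hyps V' inv' by blast
    have uB': "u \<notin> B'" using B' uu by (auto simp: eigbasis_def V'_def)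
    have bu: "b \<bullet> u = 0" if "b \<in> B'" for b using B' that by (auto simp: eigbasis_def V'_def)
    have "eigbasis A V (insert u B')"
      unfolding eigbasis_def
    proof (intro conjI)
      show "finite (insert u B')" using B' by (simp add: eigbasis_def)
      show "insert u B' \<subseteq> V" using B' uV by (auto simp: eigbasis_def V'_def)
      show "\<forall>b\<in>insert u B'. norm b = 1 \<and> A *v b = (b \<bullet> (A *v b)) *\<^sub>R b"
        using B' u1 eig by (simp add: eigbasis_def)
      show "\<forall>b\<in>insert u B'. \<forall>c\<in>insert u B'. b \<noteq> c \<longrightarrow> b \<bullet> c = 0"
        using B' bu by (auto simp: eigbasis_def inner_commute)
      show "\<forall>x\<in>V. x = (\<Sum>b\<in>insert u B'. (b \<bullet> x) *\<^sub>R b)"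
      proof
        fix x assume xV: "x \<in> V"
        define x' where "x' = x - (u \<bullet> x) *\<^sub>R u"
        have "x' \<bullet> u = 0" unfolding x'_def by (simp add: inner_diff_left uu inner_commute[of x u])
        moreover have "x' \<in> V" unfolding x'_def using xV uV V by (simp add: subspace_diff subspace_scale)
        ultimately have x'V: "x' \<in> V'" unfolding V'_def by blast
        have exp: "x' = (\<Sum>b\<in>B'. (b \<bullet> x') *\<^sub>R b)" using B' x'V by (simp add: eigbasis_def)
        have "b \<bullet> x' = b \<bullet> x" if "b \<in> B'" for b
          using bu[OF that] by (simp add: x'_def inner_diff_right)
        hence "(\<Sum>b\<in>B'. (b \<bullet> x') *\<^sub>R b) = (\<Sum>b\<in>B'. (b \<bullet> x) *\<^sub>R b)" by simp
        hence "x' = (\<Sum>b\<in>B'. (b \<bullet> x) *\<^sub>R b)" using exp by simp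
        hence "x = (u \<bullet> x) *\<^sub>R u + (\<Sum>b\<in>B'. (b \<bullet> x) *\<^sub>R b)" unfolding x'_def by (simp add: algebra_simps)
        also have "\<dots> = (\<Sum>b\<in>insert u B'. (b \<bullet> x) *\<^sub>R b)"
          using B' uB' by (simp add: eigbasis_def)
        finally show "x = (\<Sum>b\<in>insert u B'. (b \<bullet> x) *\<^sub>R b)" .
      qed
    qed
    thus ?thesis by blast
  qed
qed

lemma spectral:
  fixes A :: "real^'n^'n"
  assumes sym: "sym_mat A"
  obtains B where "eigbasis A UNIV B"
  using spectral_sub[OF sym, of UNIV] by auto


definition qmat :: "(real^'n) set \<Rightarrow> (real^'n \<Rightarrow> real) \<Rightarrow> real^'n^'n" where
  "qmat B g = (\<chi> i j. \<Sum>b\<in>B. g b * b$i * b$j)"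

lemma qmat_mult: "qmat B g *v x = (\<Sum>b\<in>B. (g b * (b \<bullet> x)) *\<^sub>R b)"
proof -
  have "(qmat B g *v x) $ i = (\<Sum>b\<in>B. (g b * (b \<bullet> x)) *\<^sub>R b) $ i" for i
  proof -
    have "(qmat B g *v x) $ i = (\<Sum>j\<in>UNIV. (\<Sum>b\<in>B. g b * b$i * b$j) * x$j)"
      by (simp add: qmat_def matrix_vector_mult_def)
    also have "\<dots> = (\<Sum>j\<in>UNIV. \<Sum>b\<in>B. g b * b$i * b$j * x$j)"
      by (simp add: sum_distrib_right)
    also have "\<dots> = (\<Sum>b\<in>B. \<Sum>j\<in>UNIV. g b * b$i * b$j * x$j)" by (rule sum.swap)
    also have "\<dots> = (\<Sum>b\<in>B. g b * (b \<bullet> x) * b$i)"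
      by (simp add: inner_vec_def sum_distrib_left mult_ac)
    also have "\<dots> = (\<Sum>b\<in>B. (g b * (b \<bullet> x)) *\<^sub>R b) $ i"
      by (simp add: sum_component)
    finally show ?thesis .
  qed
  thus ?thesis by (simp add: vec_eq_iff)
qed

lemma qmat_sym: "sym_mat (qmat B g)"
  unfolding sym_mat_def qmat_def transpose_def by (simp add: vec_eq_iff mult_ac)

lemma ob_coeff:
  assumes "eigbasis A V B" "b \<in> B"
  shows "b \<bullet> (\<Sum>c\<in>B. f c *\<^sub>R c) = f b"
proof -
  have fin: "finite B" and n1: "norm b = 1" and orth: "\<forall>c\<in>B. b \<noteq> c \<longrightarrow> b \<bullet> c = 0"
    using assms by (auto simp: eigbasis_def)
  have bb: "b \<bullet> b = 1" using n1 by (simp add: dot_square_norm)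
  have "b \<bullet> (\<Sum>c\<in>B. f c *\<^sub>R c) = (\<Sum>c\<in>B. f c * (b \<bullet> c))"
    by (simp add: inner_sum_right)
  also have "\<dots> = f b * (b \<bullet> b)"
    using fin assms(2) orth by (subst sum.remove[of _ b]) (auto intro!: sum.neutral)
  finally show ?thesis using bb by simp
qed

lemma qmat_comp:
  assumes "eigbasis A V B"
  shows "qmat B g *v (qmat B h *v x) = qmat B (\<lambda>b. g b * h b) *v x"
  unfolding qmat_mult using ob_coeff[OF assms, of _ "\<lambda>c. h c * (c \<bullet> x)"]
  by (intro sum.cong) (simp_all add: mult_ac)

lemma eig_of:
  assumes "eigbasis A V B" "b \<in> B"
  shows "A *v b = (b \<bullet> (A *v b)) *\<^sub>R b"
proof -
  have "\<forall>b\<in>B. norm b = 1 \<and> A *v b = (b \<bullet> (A *v b)) *\<^sub>R b"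
    using assms(1) unfolding eigbasis_def by (elim conjE)
  hence "norm b = 1 \<and> A *v b = (b \<bullet> (A *v b)) *\<^sub>R b" using assms(2) by (rule bspec)
  thus ?thesis by (rule conjunct2)
qed

lemma exp_of:
  assumes "eigbasis A V B" "x \<in> V"
  shows "x = (\<Sum>b\<in>B. (b \<bullet> x) *\<^sub>R b)"
proof -
  have "\<forall>x\<in>V. x = (\<Sum>b\<in>B. (b \<bullet> x) *\<^sub>R b)"
    using assms(1) unfolding eigbasis_def by (elim conjE)
  thus ?thesis using assms(2) by (rule bspec)
qed

lemma qmat_eig:
  fixes A :: "real^'n^'n"
  assumes "eigbasis A UNIV B"
  shows "A = qmat B (\<lambda>b. b \<bullet> (A *v b))"
proof -
  have "A *v x = qmat B (\<lambda>b. b \<bullet> (A *v b)) *v x" for x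
  proof -
    have "A *v x = A *v (\<Sum>b\<in>B. (b \<bullet> x) *\<^sub>R b)" by (rule arg_cong[OF exp_of[OF assms UNIV_I]])
    also have "\<dots> = (\<Sum>b\<in>B. (b \<bullet> x) *\<^sub>R (A *v b))" by (simp only: vec.sum matrix_vector_mult_scaleR)
    also have "\<dots> = (\<Sum>b\<in>B. ((b \<bullet> (A *v b)) * (b \<bullet> x)) *\<^sub>R b)"
    proof (rule sum.cong[OF refl])
      fix b assume "b \<in> B"
      define c where "c = b \<bullet> (A *v b)"
      have e: "A *v b = c *\<^sub>R b" unfolding c_def by (rule eig_of[OF assms \<open>b \<in> B\<close>])
      have "(b \<bullet> x) *\<^sub>R (A *v b) = (c * (b \<bullet> x)) *\<^sub>R b" unfolding e by (simp add: mult.commute)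
      thus "(b \<bullet> x) *\<^sub>R (A *v b) = ((b \<bullet> (A *v b)) * (b \<bullet> x)) *\<^sub>R b"
        unfolding c_def .
    qed
    finally show ?thesis by (simp add: qmat_mult)
  qed
  thus ?thesis unfolding matrix_eq by (rule allI)
qed

lemma qmat_pd:
  fixes B :: "(real^'n) set"
  assumes "eigbasis A UNIV B" "\<forall>b\<in>B. g b > 0"
  shows "pd_mat (qmat B g)"
  unfolding pd_mat_def
proof (intro conjI allI impI)
  show "sym_mat (qmat B g)" by (rule qmat_sym)
  fix x :: "real^'n" assume x0: "x \<noteq> 0"
  have fin: "finite B" using assms by (simp add: eigbasis_def)
  have xe: "x = (\<Sum>b\<in>B. (b \<bullet> x) *\<^sub>R b)" using assms by (simp add: eigbasis_def)
  have q: "x \<bullet> (qmat B g *v x) = (\<Sum>b\<in>B. g b * (b \<bullet> x)^2)"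
    by (simp add: qmat_mult inner_sum_right power2_eq_square inner_commute mult_ac)
  obtain b where bB: "b \<in> B" and bx: "b \<bullet> x \<noteq> 0"
  proof (rule ccontr)
    assume "\<not> thesis"
    with that have "\<forall>b\<in>B. b \<bullet> x = 0" by blast
    hence "x = 0" using xe by simp
    with x0 show False by simp
  qed
  have "0 < (\<Sum>b\<in>B. g b * (b \<bullet> x)^2)"
    using fin bB bx assms(2) by (intro sum_pos2[of B b]) (auto intro: mult_nonneg_nonneg less_imp_le)
  thus "0 < x \<bullet> (qmat B g *v x)" using q by simp
qed


lemma pd_sym: "pd_mat A \<Longrightarrow> sym_mat A" by (simp add: pd_mat_def)

lemma pd_pos: "pd_mat A \<Longrightarrow> x \<noteq> 0 \<Longrightarrow> 0 < x \<bullet> (A *v x)" by (simp add: pd_mat_def)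

lemma sqrt_unique:
  fixes S T :: "real^'n^'n"
  assumes S: "pd_mat S" and T: "pd_mat T" and eq: "S ** S = T ** T"
  shows "S = T"
proof -
  define D where "D = S - T"
  have symD: "sym_mat D" using pd_sym[OF S] pd_sym[OF T]
    unfolding D_def sym_mat_def by (simp add: transpose_def vec_eq_iff)
  obtain B where B: "eigbasis D UNIV B" using spectral[OF symD] by blast
  have Db: "D *v b = 0" if bB: "b \<in> B" for b
  proof -
    define \<mu> where "\<mu> = b \<bullet> (D *v b)"
    have e: "D *v b = \<mu> *\<^sub>R b" unfolding \<mu>_def by (rule eig_of[OF B bB])
    have b0: "b \<noteq> 0" using B bB unfolding eigbasis_def by auto
    have "S *v (D *v b) + D *v (T *v b) = (S ** S) *v b - (T ** T) *v b"
      unfolding D_def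
      by (simp add: matrix_vector_mult_diff_rdistrib matrix_vector_mul_assoc[symmetric]
          vec.diff)
    hence z: "S *v (D *v b) + D *v (T *v b) = 0" using eq by simp
    have "b \<bullet> (S *v (D *v b)) = \<mu> * (b \<bullet> (S *v b))"
      unfolding e by (simp add: matrix_vector_mult_scaleR)
    moreover have "b \<bullet> (D *v (T *v b)) = \<mu> * (b \<bullet> (T *v b))"
    proof -
      have "b \<bullet> (D *v (T *v b)) = (D *v b) \<bullet> (T *v b)" using sym_dot[OF symD] by simp
      also have "\<dots> = \<mu> * (b \<bullet> (T *v b))" unfolding e by simp
      finally show ?thesis .
    qed
    ultimately have "\<mu> * (b \<bullet> (S *v b) + b \<bullet> (T *v b)) = 0"
      using arg_cong[OF z, of "\<lambda>v. b \<bullet> v"] by (simp add: inner_add_right distrib_left)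
    moreover have "b \<bullet> (S *v b) + b \<bullet> (T *v b) > 0"
      using pd_pos[OF S b0] pd_pos[OF T b0] by simp
    ultimately have "\<mu> = 0" by simp
    thus ?thesis using e by simp
  qed
  have "S *v x = T *v x" for x
  proof -
    have "D *v x = D *v (\<Sum>b\<in>B. (b \<bullet> x) *\<^sub>R b)" by (rule arg_cong[OF exp_of[OF B UNIV_I]])
    also have "\<dots> = (\<Sum>b\<in>B. (b \<bullet> x) *\<^sub>R (D *v b))" by (simp only: vec.sum matrix_vector_mult_scaleR)
    also have "\<dots> = 0" using Db by simp
    finally show ?thesis unfolding D_def by (simp add: matrix_vector_mult_diff_rdistrib)
  qed
  thus ?thesis unfolding matrix_eq by (rule allI)
qed

lemma sqrt_exists:
  fixes A :: "real^'n^'n"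
  assumes A: "pd_mat A"
  shows "\<exists>S M. pd_mat S \<and> S ** S = A \<and> S ** M = mat 1 \<and> M ** S = mat 1"
proof -
  obtain B where B: "eigbasis A UNIV B" using spectral[OF pd_sym[OF A]] by blast
  define l where "l = (\<lambda>b. b \<bullet> (A *v b))"
  have lpos: "\<forall>b\<in>B. l b > 0"
  proof
    fix b assume "b \<in> B"
    hence "b \<noteq> 0" using B unfolding eigbasis_def by auto
    thus "l b > 0" unfolding l_def by (rule pd_pos[OF A])
  qed
  define S where "S = qmat B (\<lambda>b. sqrt (l b))"
  define M where "M = qmat B (\<lambda>b. 1 / sqrt (l b))"
  have "pd_mat S" unfolding S_def using lpos by (intro qmat_pd[OF B]) auto
  moreover have "S ** S = A"
  proof -
    have "(S ** S) *v x = A *v x" for x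
    proof -
      have "(S ** S) *v x = qmat B (\<lambda>b. sqrt (l b) * sqrt (l b)) *v x"
        unfolding S_def matrix_vector_mul_assoc[symmetric] by (rule qmat_comp[OF B])
      also have "\<dots> = qmat B l *v x"
        unfolding qmat_mult using lpos by (intro sum.cong refl) (simp add: less_imp_le)
      also have "\<dots> = A *v x" unfolding l_def using qmat_eig[OF B] by simp
      finally show ?thesis .
    qed
    thus ?thesis unfolding matrix_eq by (rule allI)
  qed
  moreover have "S ** M = mat 1"
  proof -
    have "(S ** M) *v x = mat 1 *v x" for x
    proof -
      have "(S ** M) *v x = qmat B (\<lambda>b. sqrt (l b) * (1 / sqrt (l b))) *v x"
        unfolding S_def M_def matrix_vector_mul_assoc[symmetric] by (rule qmat_comp[OF B])
      also have "\<dots> = (\<Sum>b\<in>B. (b \<bullet> x) *\<^sub>R b)"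
        unfolding qmat_mult using lpos by (intro sum.cong refl) (drule bspec, assumption, simp)
      also have "\<dots> = mat 1 *v x" using exp_of[OF B UNIV_I, of x] by simp
      finally show ?thesis .
    qed
    thus ?thesis unfolding matrix_eq by (rule allI)
  qed
  moreover have "M ** S = mat 1"
  proof -
    have "(M ** S) *v x = mat 1 *v x" for x
    proof -
      have "(M ** S) *v x = qmat B (\<lambda>b. (1 / sqrt (l b)) * sqrt (l b)) *v x"
        unfolding S_def M_def matrix_vector_mul_assoc[symmetric] by (rule qmat_comp[OF B])
      also have "\<dots> = (\<Sum>b\<in>B. (b \<bullet> x) *\<^sub>R b)"
        unfolding qmat_mult using lpos by (intro sum.cong refl) (drule bspec, assumption, simp)
      also have "\<dots> = mat 1 *v x" using exp_of[OF B UNIV_I, of x] by simp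
      finally show ?thesis .
    qed
    thus ?thesis unfolding matrix_eq by (rule allI)
  qed
  ultimately show ?thesis by blast
qed


lemma psd_scaled_id: "c \<ge> 0 \<Longrightarrow> psd_mat (c *\<^sub>R (mat 1 :: real^'n^'n))"
  unfolding psd_mat_def sym_mat_def
  by (simp add: transpose_scalar transpose_mat scaleR_matrix_vector_assoc[symmetric])

theorem theorem3:
  fixes \<alpha> \<beta> \<nu> :: real and t :: nat and \<Sigma> :: "real^'n^'n"
  assumes "\<alpha> > 0" "\<beta> > 0" "\<nu> > 0" "t \<ge> 1" "pd_mat \<Sigma>"
  shows "\<exists>H :: real^'n^'n. sym_mat H \<and>
    H \<preceq>\<^sub>L ((1 / alpha_t \<alpha> t) * (beta_t \<beta> (t + 1) / beta_t \<beta> t - omega_t t)) *\<^sub>R mat 1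
          + (beta_t \<beta> (t + 1) * gamma_t \<alpha> \<beta> \<nu> t / alpha_t \<alpha> t) *\<^sub>R \<Sigma> \<and>
    \<nu> *\<^sub>R mat 1 \<preceq>\<^sub>L mat_inv_sqrt \<Sigma> ** H ** mat_inv_sqrt \<Sigma>"
proof -
  obtain S M where S: "pd_mat S" and SS: "S ** S = \<Sigma>" and SM: "S ** M = mat 1" and MS: "M ** S = mat 1"
    using sqrt_exists[OF assms(5)] by blast
  have msq: "mat_sqrt \<Sigma> = S"
    unfolding mat_sqrt_def
  proof (rule the_equality)
    show "pd_mat S \<and> S ** S = \<Sigma>" using S SS by simp
    fix T assume "pd_mat T \<and> T ** T = \<Sigma>"
    thus "T = S" using sqrt_unique[of T S] S SS by simp
  qed
  define N where "N = mat_inv_sqrt \<Sigma>"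
  have "S ** N = mat 1 \<and> N ** S = mat 1"
    unfolding N_def mat_inv_sqrt_def msq matrix_inv_def
    by (rule someI[of _ M]) (simp add: SM MS)
  hence SN: "S ** N = mat 1" and NS: "N ** S = mat 1" by auto
  define c where "c = (1 / alpha_t \<alpha> t) * (beta_t \<beta> (t + 1) / beta_t \<beta> t - omega_t t)"
  define d where "d = beta_t \<beta> (t + 1) * gamma_t \<alpha> \<beta> \<nu> t / alpha_t \<alpha> t"
  have tpos: "real t > 0" using assms(4) by simp
  have sq: "sqrt (real t + 1) > 0" by simp
  have c0: "c \<ge> 0"
  proof -
    have "beta_t \<beta> (t + 1) / beta_t \<beta> t = (real t + 1) / real t"
      unfolding beta_t_def using assms(2) tpos by (simp add: field_simps)
    also have "\<dots> \<ge> 1" using tpos by simp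
    finally have "beta_t \<beta> (t + 1) / beta_t \<beta> t - omega_t t \<ge> 0" by (simp add: omega_t_def)
    moreover have "1 / alpha_t \<alpha> t > 0" unfolding alpha_t_def using assms(1) sq by simp
    ultimately show ?thesis unfolding c_def by simp
  qed
  have d: "d = \<nu>"
  proof -
    define r where "r = sqrt (real t + 1)"
    have r0: "r > 0" unfolding r_def by simp
    have ss: "real t + 1 = r * r" unfolding r_def by simp
    have "d = ((real t + 1) * \<beta> * (\<alpha> * \<nu> / (\<beta> * r))) / (r * \<alpha>)"
      unfolding d_def beta_t_def gamma_t_def alpha_t_def r_def by simp
    also have "\<dots> = ((r * r) * \<beta> * (\<alpha> * \<nu> / (\<beta> * r))) / (r * \<alpha>)" unfolding ss ..
    also have "\<dots> = \<nu>" using r0 assms(1,2) by (simp add: field_simps)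
    finally show ?thesis .
  qed
  define H where "H = \<nu> *\<^sub>R \<Sigma>"
  have symH: "sym_mat H" using pd_sym[OF assms(5)] unfolding H_def sym_mat_def
    by (simp add: transpose_scalar)
  have le1: "H \<preceq>\<^sub>L c *\<^sub>R mat 1 + d *\<^sub>R \<Sigma>"
    unfolding loewner_le_def H_def d using psd_scaled_id[OF c0] by simp
  have "N ** H ** N = \<nu> *\<^sub>R ((N ** S) ** (S ** N))"
    unfolding H_def SS[symmetric]
    by (simp add: matrix_scalar_ac scalar_matrix_assoc matrix_mul_assoc)
  hence NHN: "N ** H ** N = \<nu> *\<^sub>R mat 1" by (simp add: NS SN matrix_mul_lid)
  have le2: "\<nu> *\<^sub>R mat 1 \<preceq>\<^sub>L N ** H ** N"
    unfolding loewner_le_def NHN using psd_scaled_id[of 0] by simp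
  show ?thesis using symH le1 le2 unfolding c_def d_def N_def by blast
qed

end
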